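(* Let $G$ be a $*$-graph in which every vertex has valency $4$ or $6$, and let $G'$ be an expansion of $G$. If $G'$ contains a Vassiliev obstruct, then $G$ contains a Vassiliev obstruct.
   Context: Graphs are finite and may have loops and multiple edges; each edge consists of two half-edges. A $*$-graph is a graph together with, for each vertex $a$ of valency $n$, an unoriented cyclic order $X_a$ of the half-edges at $a$, i.e. a bijection $X_a$ from the half-edges at $a$ to the vertices of the cycle graph $C_n$ (a cyclic order up to rotation and reversal). An $X$-graph is a $4$-regular graph with, at each vertex, a partition of its half-edges into two pairs of opposite half-edges; this is the same as a $*$-structure at each $4$-valent vertex (opposite = non-adjacent in the cyclic order). Expansion of a $6$-valent vertex $v$: label its half-edges $h_1,\dots,h_6$ so that $X_v$ is the cyclic order $(h_1,\dots,h_6)$; replace $v$ by a triangle on new vertices $p_1,p_2,p_3$, attach $h_1,h_2$ to $p_1$, $h_3,h_4$ to $p_2$, $h_5,h_6$ to $p_3$, with $X$-structures: at $p_1$, $h_1$ opposite the half-edge of $p_1p_2$ and $h_2$ opposite that of $p_1p_3$; at $p_2$, $h_3$ opposite that of $p_2p_3$ and $h_4$ opposite that of $p_2p_1$; at $p_3$, $h_5$ opposite that of $p_3p_1$ and $h_6$ opposite that of $p_3p_2$. An expansion of $G$ replaces every $6$-valent vertex in this way (choices of labeling made independently), the $4$-valent vertices keeping their structure. A cycle is a closed walk using no edge more than once (vertices may repeat). For edge-disjoint cycles $A,B$, a crossing is an occurrence of a common vertex $a$ where $A$ passes via half-edges $A_1,A_2$ and $B$ via $B_1,B_2$ with $X_a(A_1),X_a(B_1),X_a(A_2),X_a(B_2)$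 alternating in $C_n$ (for a $4$-valent vertex: each cycle passes straight through via a pair of opposite half-edges); crossings are counted with multiplicity over all such pairs of passages. A Vassiliev obstruct is a pair of edge-disjoint cycles with exactly one crossing. *)

theory Defs
  imports Main
begin

text \<open>A graph (loops and multiple edges allowed) given by half-edges:
  each half-edge h is attached to the vertex vert h; the edge containing h
  consists of h and its partner opp h (a fixed-point-free involution).
  The star-structure is a map cyc which, at each vertex a of valency n,
  is a bijection from the half-edges at a onto the vertices 0..n-1 of the
  cycle graph C_n (cyclic order i, i+1 mod n).  Rotations/reversals of cyc
  give the same star-structure; all notions below are invariant under them.\<close>

record ('v, 'h) sgraph =
  verts  :: "'v set"
  hedges :: "'h set"
  vert   :: "'h \<Rightarrow> 'v"
  opp    :: "'h \<Rightarrow> 'h"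
  cyc    :: "'h \<Rightarrow> nat"

definition halfedges_at :: "('v, 'h) sgraph \<Rightarrow> 'v \<Rightarrow> 'h set" where
  "halfedges_at G a = {h \<in> hedges G. vert G h = a}"

definition valency :: "('v, 'h) sgraph \<Rightarrow> 'v \<Rightarrow> nat" where
  "valency G a = card (halfedges_at G a)"

definition star_graph :: "('v, 'h) sgraph \<Rightarrow> bool" where
  "star_graph G \<longleftrightarrow> finite (verts G) \<and> finite (hedges G) \<and>
     (\<forall>h \<in> hedges G. vert G h \<in> verts G \<and> opp G h \<in> hedges G \<and>
        opp G h \<noteq> h \<and> opp G (opp G h) = h) \<and>
     (\<forall>a \<in> verts G. bij_betw (cyc G) (halfedges_at G a) {0..<valency G a})"

text \<open>Cyclic (clockwise) distance from position a to position b in C_n, and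
  the alternation of four positions a,b,c,d in C_n: they are distinct and
  b, d lie on different arcs of C_n between a and c.\<close>

definition cdist :: "nat \<Rightarrow> nat \<Rightarrow> nat \<Rightarrow> nat" where
  "cdist n a b = (b + n - a) mod n"

definition alternating :: "nat \<Rightarrow> nat \<Rightarrow> nat \<Rightarrow> nat \<Rightarrow> nat \<Rightarrow> bool" where
  "alternating n a b c d \<longleftrightarrow> distinct [a, b, c, d] \<and>
     ((cdist n a b < cdist n a c) \<noteq> (cdist n a d < cdist n a c))"

text \<open>A cycle (closed walk using no edge twice) is a nonempty list of
  half-edges hs: the i-th step traverses the edge from hs!i to opp (hs!i),
  arriving at the vertex of hs!((i+1) mod length hs).\<close>

definition is_cycle :: "('v, 'h) sgraph \<Rightarrow> 'h list \<Rightarrow> bool" where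
  "is_cycle G hs \<longleftrightarrow> hs \<noteq> [] \<and> set hs \<subseteq> hedges G \<and>
     distinct (hs @ map (opp G) hs) \<and>
     (\<forall>i < length hs. vert G (opp G (hs ! i)) = vert G (hs ! ((i + 1) mod length hs)))"

definition edges_of :: "('v, 'h) sgraph \<Rightarrow> 'h list \<Rightarrow> 'h set" where
  "edges_of G hs = set (hs @ map (opp G) hs)"

definition edge_disjoint :: "('v, 'h) sgraph \<Rightarrow> 'h list \<Rightarrow> 'h list \<Rightarrow> bool" where
  "edge_disjoint G A B \<longleftrightarrow> edges_of G A \<inter> edges_of G B = {}"

text \<open>The i-th passage of a cycle hs goes through the vertex of
  pass_out hs i via the half-edges pass_in hs i and pass_out hs i.\<close>

definition pass_in :: "('v, 'h) sgraph \<Rightarrow> 'h list \<Rightarrow> nat \<Rightarrow> 'h" where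
  "pass_in G hs i = opp G (hs ! i)"

definition pass_out :: "'h list \<Rightarrow> nat \<Rightarrow> 'h" where
  "pass_out hs i = hs ! ((i + 1) mod length hs)"

definition crossings :: "('v, 'h) sgraph \<Rightarrow> 'h list \<Rightarrow> 'h list \<Rightarrow> nat" where
  "crossings G A B = card {(i, j). i < length A \<and> j < length B \<and>
      vert G (pass_out A i) = vert G (pass_out B j) \<and>
      alternating (valency G (vert G (pass_out A i)))
        (cyc G (pass_in G A i)) (cyc G (pass_in G B j))
        (cyc G (pass_out A i)) (cyc G (pass_out B j))}"

definition has_vassiliev_obstruct :: "('v, 'h) sgraph \<Rightarrow> bool" where
  "has_vassiliev_obstruct G \<longleftrightarrow> (\<exists>A B. is_cycle G A \<and> is_cycle G B \<and>
      edge_disjoint G A B \<and> crossings G A B = 1)"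

text \<open>Expansion.  lab v i (i = 0..5) is the half-edge h_(i+1) at a 6-valent
  vertex v; the labelling must list the half-edges at v in the cyclic order
  given by cyc (up to rotation and reversal).  In the expansion, an old
  4-valent vertex a becomes (a,0); a 6-valent vertex v is replaced by the
  triangle on p_k = (v,k), k = 1,2,3; the new half-edge Inr (v,k,j) is the
  end at p_k of the triangle edge p_k p_j.\<close>

definition lab_ok :: "('v, 'h) sgraph \<Rightarrow> ('v \<Rightarrow> nat \<Rightarrow> 'h) \<Rightarrow> bool" where
  "lab_ok G lab \<longleftrightarrow> (\<forall>v \<in> verts G. valency G v = 6 \<longrightarrow>
      bij_betw (lab v) {0..<6} (halfedges_at G v) \<and>
      (\<exists>r < 6. (\<forall>i < 6. cyc G (lab v i) = (r + i) mod 6) \<or>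
               (\<forall>i < 6. cyc G (lab v i) = (r + 6 - i) mod 6)))"

definition lab_idx :: "('v, 'h) sgraph \<Rightarrow> ('v \<Rightarrow> nat \<Rightarrow> 'h) \<Rightarrow> 'h \<Rightarrow> nat" where
  "lab_idx G lab h = (THE i. i < 6 \<and> lab (vert G h) i = h)"

definition expand :: "('v, 'h) sgraph \<Rightarrow> ('v \<Rightarrow> nat \<Rightarrow> 'h) \<Rightarrow>
    ('v \<times> nat, 'h + 'v \<times> nat \<times> nat) sgraph" where
  "expand G lab = \<lparr>
     verts = {(a, 0) | a. a \<in> verts G \<and> valency G a = 4} \<union>
             {(v, k) | v k. v \<in> verts G \<and> valency G v = 6 \<and> k \<in> {1, 2, 3}},
     hedges = Inl ` hedges G \<union>
             {Inr (v, k, j) | v k j. v \<in> verts G \<and> valency G v = 6 \<and>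
                 k \<in> {1, 2, 3} \<and> j \<in> {1, 2, 3} \<and> k \<noteq> j},
     vert = (\<lambda>x. case x of
               Inl h \<Rightarrow> (if valency G (vert G h) = 6
                         then (vert G h, lab_idx G lab h div 2 + 1)
                         else (vert G h, 0))
             | Inr (v, k, j) \<Rightarrow> (v, k)),
     opp = (\<lambda>x. case x of
               Inl h \<Rightarrow> Inl (opp G h)
             | Inr (v, k, j) \<Rightarrow> Inr (v, j, k)),
     cyc = (\<lambda>x. case x of
               Inl h \<Rightarrow> (if valency G (vert G h) = 6
                         then lab_idx G lab h mod 2
                         else cyc G h)
             | Inr (v, k, j) \<Rightarrow> (if j = k mod 3 + 1 then 2 else 3))
   \<rparr>"

definition is_expansion :: "('v, 'h) sgraph \<Rightarrow>
    ('v \<times> nat, 'h + 'v \<times> nat \<times> nat) sgraph \<Rightarrow> bool" where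
  "is_expansion G G' \<longleftrightarrow> (\<exists>lab. lab_ok G lab \<and> G' = expand G lab)"

end

theory Submission
  imports Defs
begin


datatype mc = CL nat | CR nat nat

fun mvert :: "mc \<Rightarrow> nat" where
  "mvert (CL i) = i div 2 + 1" | "mvert (CR k j) = k"
fun mcyc :: "mc \<Rightarrow> nat" where
  "mcyc (CL i) = i mod 2" | "mcyc (CR k j) = (if j = k mod 3 + 1 then 2 else 3)"

definition mpas :: "nat \<Rightarrow> nat \<Rightarrow> (nat \<times> nat) list \<Rightarrow> (mc \<times> mc) list" where
  "mpas a b rr = zip (CL a # map (\<lambda>(k,j). CR j k) rr) (map (\<lambda>(k,j). CR k j) rr @ [CL b])"

definition mcross :: "mc \<times> mc \<Rightarrow> mc \<times> mc \<Rightarrow> bool" where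
  "mcross p q = (mvert (snd p) = mvert (snd q) \<and>
     alternating 4 (mcyc (fst p)) (mcyc (fst q)) (mcyc (snd p)) (mcyc (snd q)))"

definition E6 :: "(nat \<times> nat) list" where
  "E6 = [(1,2),(1,3),(2,1),(2,3),(3,1),(3,2)]"

fun vchain :: "nat \<Rightarrow> nat \<Rightarrow> (nat \<times> nat) list \<Rightarrow> bool" where
  "vchain k k' [] = (k = k')"
| "vchain k k' ((a,b)#rest) = (a = k \<and> vchain b k' rest)"

definition alltr :: "(nat \<times> nat) list list" where
  "alltr = [[]] @ map (\<lambda>e. [e]) E6 @ concat (map (\<lambda>e1. map (\<lambda>e2. [e1,e2]) E6) E6)
     @ concat (map (\<lambda>e1. concat (map (\<lambda>e2. map (\<lambda>e3. [e1,e2,e3]) E6) E6)) E6)"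

definition validtr :: "nat \<Rightarrow> nat \<Rightarrow> (nat \<times> nat) list \<Rightarrow> bool" where
  "validtr k k' rr = (vchain k k' rr \<and> distinct rr \<and> (\<forall>(a,b)\<in>set rr. (b,a) \<notin> set rr))"

definition trl :: "nat \<Rightarrow> nat \<Rightarrow> (nat \<times> nat) list list" where
  "trl k k' = filter (validtr k k') alltr"

definition trl_tab :: "nat \<Rightarrow> nat \<Rightarrow> (nat \<times> nat) list list" where
  "trl_tab k k' = (if k = k' then [[], [(k, k mod 3 + 1), (k mod 3 + 1, (k+1) mod 3 + 1), ((k+1) mod 3 + 1, k)],
                      [(k, (k+1) mod 3 + 1), ((k+1) mod 3 + 1, k mod 3 + 1), (k mod 3 + 1, k)]]
     else [[(k,k')], [(k, 6 - k - k'), (6-k-k', k')]])"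

lemma trl_tab0: "\<forall>k\<in>set [1,2,3]. \<forall>k'\<in>set [1,2,3]. set (trl k k') = set (trl_tab k k')"
  by code_simp

definition mcount :: "nat \<Rightarrow> nat \<Rightarrow> (nat \<times> nat) list \<Rightarrow> nat \<Rightarrow> nat \<Rightarrow> (nat \<times> nat) list \<Rightarrow> nat" where
  "mcount a b rr c d qq = length (remdups (filter (\<lambda>(p,q). mcross p q) (List.product (mpas a b rr) (mpas c d qq))))"

definition edisj :: "(nat \<times> nat) list \<Rightarrow> (nat \<times> nat) list \<Rightarrow> bool" where
  "edisj rr qq = (\<forall>(k,j)\<in>set rr. (k,j) \<notin> set qq \<and> (j,k) \<notin> set qq)"

lemma modelcheck:
  "\<forall>a\<in>set [0..<6]. \<forall>b\<in>set [0..<6]. \<forall>c\<in>set [0..<6]. \<forall>d\<in>set [0..<6].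
     distinct [a,b,c,d] \<longrightarrow>
     (\<forall>rr\<in>set (trl_tab (a div 2 + 1) (b div 2 + 1)). \<forall>qq\<in>set (trl_tab (c div 2 + 1) (d div 2 + 1)).
       edisj rr qq \<longrightarrow> (alternating 6 a c b d \<longleftrightarrow> odd (mcount a b rr c d qq)))"
  by code_simp


lemma rotinv: "\<forall>r\<in>set [0..<6]. \<forall>a\<in>set [0..<6]. \<forall>b\<in>set [0..<6]. \<forall>c\<in>set [0..<6]. \<forall>d\<in>set [0..<6].
   alternating 6 ((r+a) mod 6) ((r+b) mod 6) ((r+c) mod 6) ((r+d) mod 6) = alternating 6 a b c d
 \<and> alternating 6 ((r+6-a) mod 6) ((r+6-b) mod 6) ((r+6-c) mod 6) ((r+6-d) mod 6) = alternating 6 a b c d"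
  by code_simp




lemma len_le3:
  assumes "set rr \<subseteq> set E6" "distinct rr" "\<forall>(a,b)\<in>set rr. (b,a) \<notin> set rr"
  shows "length rr \<le> 3"
proof -
  let ?u = "\<lambda>(a::nat,b::nat). {a,b}"
  have inj: "inj_on ?u (set rr)"
  proof (rule inj_onI)
    fix p q assume p: "p \<in> set rr" and q: "q \<in> set rr" and e: "?u p = ?u q"
    obtain a b where pab: "p = (a,b)" by (cases p)
    obtain c d where qcd: "q = (c,d)" by (cases q)
    have "a \<noteq> b" using p assms(1) pab by (auto simp: E6_def)
    hence "(a,b) = (c,d) \<or> (a,b) = (d,c)" using e pab qcd by (auto simp: doubleton_eq_iff)
    thus "p = q" using assms(3) p q pab qcd by auto
  qed
  have sub: "?u ` set rr \<subseteq> {{1,2},{1,3},{2,3}}" using assms(1) by (auto simp: E6_def)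
  have "length rr = card (set rr)" using assms(2) by (simp add: distinct_card)
  also have "\<dots> = card (?u ` set rr)" using inj by (simp add: card_image)
  also have "\<dots> \<le> card {{1::nat,2},{1,3},{2,3}}" by (rule card_mono[OF _ sub]) auto
  also have "\<dots> \<le> 3" using card_length[of "[{1::nat,2},{1,3},{2,3}]"] by simp
  finally show ?thesis .
qed

lemma mem_alltr:
  assumes "set rr \<subseteq> set E6" "length rr \<le> 3"
  shows "rr \<in> set alltr"
proof -
  have "rr = [] \<or> (\<exists>e1. rr = [e1]) \<or> (\<exists>e1 e2. rr = [e1,e2]) \<or> (\<exists>e1 e2 e3. rr = [e1,e2,e3])"
    using assms(2) by (cases rr; cases "tl rr"; cases "tl (tl rr)"; cases "tl (tl (tl rr))"; auto)
  thus ?thesis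
  proof (elim disjE exE)
    fix e1 e2 assume r: "rr = [e1,e2]"
    have "[e1,e2] \<in> set (concat (map (\<lambda>e1. map (\<lambda>e2. [e1,e2]) E6) E6))"
      unfolding set_concat set_map using assms(1) r by auto
    thus ?thesis using r unfolding alltr_def set_append Un_iff by blast
  next
    fix e1 e2 e3 assume r: "rr = [e1,e2,e3]"
    have "[e1,e2,e3] \<in> set (concat (map (\<lambda>e1. concat (map (\<lambda>e2. map (\<lambda>e3. [e1,e2,e3]) E6) E6)) E6))"
      unfolding set_concat set_map using assms(1) r by auto
    thus ?thesis using r unfolding alltr_def set_append Un_iff by blast
  qed (use assms(1) in \<open>auto simp: alltr_def\<close>)
qed

lemma trail_mem:
  assumes "set rr \<subseteq> set E6" "validtr k k' rr" "k \<in> {1,2,3}" "k' \<in> {1,2,3}"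
  shows "rr \<in> set (trl_tab k k')"
proof -
  have "length rr \<le> 3" using len_le3 assms(1,2) by (auto simp: validtr_def)
  hence "rr \<in> set (trl k k')" using mem_alltr assms(1,2) by (simp add: trl_def)
  thus ?thesis using trl_tab0 assms(3,4) by auto
qed




definition cpairs :: "'a list \<Rightarrow> ('a \<times> 'a) set" where
  "cpairs xs = {(xs!i, xs!((i+1) mod length xs)) | i. i < length xs}"

fun lpairs :: "'a list \<Rightarrow> ('a \<times> 'a) set" where
  "lpairs (x#y#zs) = insert (x,y) (lpairs (y#zs))"
| "lpairs _ = {}"

lemma lpairs_zip: "lpairs xs = set (zip xs (tl xs))"
  by (induction xs rule: lpairs.induct) auto

lemma zip_tl_butlast: "zip xs (tl xs) = zip (butlast xs) (tl xs)"
  by (induction xs rule: lpairs.induct) auto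

lemma lpairs_nth: "lpairs xs = {(xs!i, xs!(Suc i)) | i. Suc i < length xs}"
  unfolding lpairs_zip by (auto simp: set_zip nth_tl)

lemma lpairs_append: "lpairs (xs @ y # ys) = lpairs (xs @ [y]) \<union> lpairs (y # ys)"
  by (induction xs rule: lpairs.induct) auto

lemma lpairs_mem: "(u,w) \<in> lpairs L \<Longrightarrow> u \<in> set (butlast L) \<and> w \<in> set (tl L)"
  unfolding lpairs_zip zip_tl_butlast by (auto dest: set_zip_leftD set_zip_rightD)

lemma lpairs_mem2: "(u,w) \<in> lpairs L \<Longrightarrow> u \<in> set L \<and> w \<in> set L"
  using lpairs_mem by (metis in_set_butlastD list.set_sel(2) tl_Nil empty_iff list.set(1))

lemma set_lpairs: "length L \<ge> 2 \<Longrightarrow> set L \<subseteq> fst ` lpairs L \<union> snd ` lpairs L"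
proof (induction L rule: lpairs.induct)
  case (1 x y zs)
  show ?case
  proof (cases zs)
    case Nil thus ?thesis by force
  next
    case (Cons a b)
    hence "set (y#zs) \<subseteq> fst ` lpairs (y#zs) \<union> snd ` lpairs (y#zs)" using 1 by auto
    thus ?thesis by force
  qed
qed auto

lemma cpairs_lpairs: "xs \<noteq> [] \<Longrightarrow> cpairs xs = lpairs (xs @ [hd xs])"
proof -
  assume ne: "xs \<noteq> []"
  show ?thesis
    unfolding cpairs_def lpairs_nth
  proof (intro set_eqI iffI)
    fix p assume "p \<in> {(xs!i, xs!((i+1) mod length xs)) | i. i < length xs}"
    then obtain i where i: "i < length xs" "p = (xs!i, xs!((i+1) mod length xs))" by auto
    show "p \<in> {((xs @ [hd xs])!i, (xs @ [hd xs])!(Suc i)) | i. Suc i < length (xs @ [hd xs])}"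
    proof (cases "Suc i < length xs")
      case True thus ?thesis using i by (auto simp: nth_append intro!: exI[of _ i])
    next
      case False
      hence "Suc i = length xs" using i by auto
      thus ?thesis using i ne by (auto simp: nth_append hd_conv_nth intro!: exI[of _ i])
    qed
  next
    fix p assume "p \<in> {((xs @ [hd xs])!i, (xs @ [hd xs])!(Suc i)) | i. Suc i < length (xs @ [hd xs])}"
    then obtain i where i: "Suc i < length (xs @ [hd xs])" "p = ((xs @ [hd xs])!i, (xs @ [hd xs])!(Suc i))" by auto
    show "p \<in> {(xs!i, xs!((i+1) mod length xs)) | i. i < length xs}"
    proof (cases "Suc i < length xs")
      case True thus ?thesis using i by (auto simp: nth_append intro!: exI[of _ i])
    next
      case False
      hence "Suc i = length xs" using i by auto
      thus ?thesis using i ne by (auto simp: nth_append hd_conv_nth intro!: exI[of _ i])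
    qed
  qed
qed

lemma cpairs_rotate1: "cpairs (rotate1 xs) = cpairs xs"
proof (cases xs)
  case Nil thus ?thesis by simp
next
  case (Cons x ys)
  show ?thesis
  proof (cases ys)
    case Nil thus ?thesis using Cons by simp
  next
    case (Cons y zs)
    have "cpairs (rotate1 xs) = lpairs (y # zs @ [x] @ [y])"
      using Cons \<open>xs = x # ys\<close> by (simp add: cpairs_lpairs)
    also have "\<dots> = lpairs (y # zs @ [x]) \<union> lpairs [x, y]"
      using lpairs_append[of "y # zs" x "[y]"] by simp
    also have "\<dots> = lpairs (x # y # zs @ [x])" by auto
    also have "\<dots> = cpairs xs" using Cons \<open>xs = x # ys\<close> by (simp add: cpairs_lpairs)
    finally show ?thesis .
  qed
qed

lemma cpairs_rotate: "cpairs (rotate k xs) = cpairs xs"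
  by (induction k) (auto simp: cpairs_rotate1)

definition blk :: "'a \<times> 'b list \<Rightarrow> ('a + 'b) list" where
  "blk p = Inl (fst p) # map Inr (snd p)"

lemma block_decomp:
  "xs \<noteq> [] \<Longrightarrow> isl (hd xs) \<Longrightarrow> \<exists>bl. bl \<noteq> [] \<and> xs = concat (map blk bl)"
proof (induction "length xs" arbitrary: xs rule: less_induct)
  case less
  obtain x ys where xs: "xs = Inl x # ys" using less.prems
    by (cases xs) (auto simp: isl_def)
  define rs where "rs = takeWhile (\<lambda>u. \<not> isl u) ys"
  define rest where "rest = dropWhile (\<lambda>u. \<not> isl u) ys"
  have ys: "ys = rs @ rest" by (simp add: rs_def rest_def)
  have nl: "\<forall>u\<in>set rs. \<not> isl u" unfolding rs_def by (auto dest: set_takeWhileD)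
  have "map (Inr \<circ> projr) rs = rs"
  proof (rule map_idI)
    fix u assume "u \<in> set rs" thus "(Inr \<circ> projr) u = u" using nl by (cases u) auto
  qed
  hence rsr: "rs = map Inr (map projr rs)" by simp
  show ?case
  proof (cases rest)
    case Nil
    thus ?thesis using xs ys rsr by (intro exI[of _ "[(x, map projr rs)]"]) (auto simp: blk_def)
  next
    case (Cons r rr)
    have "isl (hd rest)" unfolding rest_def using Cons rest_def
      by (metis hd_dropWhile list.distinct(1))
    moreover have "length rest < length xs" using xs ys by simp
    ultimately obtain bl where "bl \<noteq> []" "rest = concat (map blk bl)"
      using less.hyps[of rest] Cons by auto
    thus ?thesis using xs ys rsr
      by (intro exI[of _ "(x, map projr rs) # bl"]) (auto simp: blk_def)
  qed
qed

fun segs :: "('a \<times> 'b list) list \<Rightarrow> 'a \<Rightarrow> ('a \<times> 'b list \<times> 'a) list" where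
  "segs [] z = []"
| "segs ((x,r)#bl) z = (x, r, (case bl of [] \<Rightarrow> z | p # _ \<Rightarrow> fst p)) # segs bl z"

definition segl :: "'a \<times> 'b list \<times> 'a \<Rightarrow> ('a + 'b) list" where
  "segl s = Inl (fst s) # map Inr (fst (snd s)) @ [Inl (snd (snd s))]"

definition tailseg :: "'a \<times> 'b list \<times> 'a \<Rightarrow> ('a + 'b) list" where
  "tailseg s = map Inr (fst (snd s)) @ [Inl (snd (snd s))]"

lemma concat_blk_append:
  "bl \<noteq> [] \<Longrightarrow> concat (map blk bl) @ [Inl z] = Inl (fst (hd bl)) # concat (map tailseg (segs bl z))"
proof (induction bl z rule: segs.induct)
  case (2 x r bl z)
  show ?case
  proof (cases bl)
    case Nil thus ?thesis by (simp add: blk_def tailseg_def)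
  next
    case (Cons p bl')
    thus ?thesis using 2 by (simp add: blk_def tailseg_def)
  qed
qed simp

lemma L1:
  "bl \<noteq> [] \<Longrightarrow> lpairs (concat (map blk bl) @ [Inl z]) = (\<Union>s\<in>set (segs bl z). lpairs (segl s))"
proof (induction bl z rule: segs.induct)
  case (2 x r bl z)
  show ?case
  proof (cases bl)
    case Nil thus ?thesis by (simp add: blk_def segl_def)
  next
    case (Cons p bl')
    have e: "concat (map blk bl) @ [Inl z] = Inl (fst p) # concat (map tailseg (segs bl z))"
      using concat_blk_append[of bl z] Cons by simp
    have "lpairs (concat (map blk ((x,r)#bl)) @ [Inl z])
        = lpairs ((Inl x # map Inr r) @ Inl (fst p) # concat (map tailseg (segs bl z)))"
      using e by (simp add: blk_def)
    also have "\<dots> = lpairs (Inl x # map Inr r @ [Inl (fst p)]) \<union> lpairs (Inl (fst p) # concat (map tailseg (segs bl z)))"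
      by (subst lpairs_append) simp
    also have "\<dots> = lpairs (segl (x, r, fst p)) \<union> lpairs (concat (map blk bl) @ [Inl z])"
      using e by (simp add: segl_def)
    finally show ?thesis using 2 Cons by simp
  qed
qed simp

lemma L2:
  "bl \<noteq> [] \<Longrightarrow> lpairs (map fst bl @ [z]) = (\<lambda>(x,r,y). (x,y)) ` set (segs bl z)"
proof (induction bl z rule: segs.induct)
  case (2 x r bl z)
  show ?case
  proof (cases bl)
    case Nil thus ?thesis by simp
  next
    case (Cons p bl')
    thus ?thesis using 2 by (cases p) auto
  qed
qed simp

lemma L3: "map (\<lambda>(x,r,y). (x,r)) (segs bl z) = bl"
  by (induction bl z rule: segs.induct) auto

lemma filter_blk: "filter isl (concat (map blk bl)) = map (Inl \<circ> fst) bl"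
  by (induction bl) (auto simp: blk_def filter_map o_def)




definition pas :: "('v, 'h) sgraph \<Rightarrow> 'h list \<Rightarrow> ('h \<times> 'h) set" where
  "pas G hs = (\<lambda>(x,y). (opp G x, y)) ` cpairs hs"

definition crP :: "('v, 'h) sgraph \<Rightarrow> 'h \<times> 'h \<Rightarrow> 'h \<times> 'h \<Rightarrow> bool" where
  "crP G \<alpha> \<beta> = (vert G (snd \<alpha>) = vert G (snd \<beta>) \<and>
     alternating (valency G (vert G (snd \<alpha>))) (cyc G (fst \<alpha>)) (cyc G (fst \<beta>)) (cyc G (snd \<alpha>)) (cyc G (snd \<beta>)))"

lemma suc_mod_inj: "i < n \<Longrightarrow> i' < n \<Longrightarrow> Suc i mod n = Suc i' mod n \<Longrightarrow> i = i'"
  by (metis Suc_lessI mod_Suc mod_less mod_self nat.distinct(1) old.nat.inject)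

lemma pas_idx: "pas G hs = {(pass_in G hs i, pass_out hs i) | i. i < length hs}"
  unfolding pas_def cpairs_def pass_in_def pass_out_def by auto

lemma crossings_pas:
  assumes "distinct A" "distinct B"
  shows "crossings G A B = card {(\<alpha>,\<beta>). \<alpha> \<in> pas G A \<and> \<beta> \<in> pas G B \<and> crP G \<alpha> \<beta>}"
proof -
  define I where "I = {(i, j). i < length A \<and> j < length B \<and>
      vert G (pass_out A i) = vert G (pass_out B j) \<and>
      alternating (valency G (vert G (pass_out A i)))
        (cyc G (pass_in G A i)) (cyc G (pass_in G B j))
        (cyc G (pass_out A i)) (cyc G (pass_out B j))}"
  define f where "f = (\<lambda>(i,j). ((pass_in G A i, pass_out A i), (pass_in G B j, pass_out B j)))"
  have inj: "inj_on f I"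
  proof (rule inj_onI)
    fix p q assume p: "p \<in> I" and q: "q \<in> I" and e: "f p = f q"
    obtain i j where pij: "p = (i,j)" by (cases p)
    obtain i' j' where qij: "q = (i',j')" by (cases q)
    have "A ! (Suc i mod length A) = A ! (Suc i' mod length A)"
      using e pij qij by (simp add: f_def pass_out_def)
    moreover have "i < length A" "i' < length A" using p q pij qij by (auto simp: I_def)
    ultimately have "i = i'" using assms(1) nth_eq_iff_index_eq[OF assms(1), of "Suc i mod length A" "Suc i' mod length A"]
      by (metis suc_mod_inj mod_less_divisor gr_zeroI less_zeroE)
    moreover have "B ! (Suc j mod length B) = B ! (Suc j' mod length B)"
      using e pij qij by (simp add: f_def pass_out_def)
    moreover have "j < length B" "j' < length B" using p q pij qij by (auto simp: I_def)
    ultimately have "j = j'" using nth_eq_iff_index_eq[OF assms(2), of "Suc j mod length B" "Suc j' mod length B"]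
      by (metis suc_mod_inj mod_less_divisor gr_zeroI less_zeroE)
    thus "p = q" using \<open>i = i'\<close> pij qij by simp
  qed
  have img: "f ` I = {(\<alpha>,\<beta>). \<alpha> \<in> pas G A \<and> \<beta> \<in> pas G B \<and> crP G \<alpha> \<beta>}"
    unfolding pas_idx f_def I_def crP_def by auto
  have "crossings G A B = card I" by (simp add: crossings_def I_def)
  also have "\<dots> = card (f ` I)" using inj by (simp add: card_image)
  finally show ?thesis using img by simp
qed

lemma pas_rotate: "pas G (rotate k hs) = pas G hs"
  by (simp add: pas_def cpairs_rotate)




locale ctx =
  fixes G :: "('v, 'h) sgraph" and lab :: "'v \<Rightarrow> nat \<Rightarrow> 'h"
  assumes sg: "star_graph G"
    and val: "\<forall>a \<in> verts G. valency G a = 4 \<or> valency G a = 6"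
    and lo: "lab_ok G lab"
begin

abbreviation "H \<equiv> expand G lab"

lemma vH_Inl: "vert H (Inl h) = (if valency G (vert G h) = 6 then (vert G h, lab_idx G lab h div 2 + 1) else (vert G h, 0))"
  by (simp add: expand_def)
lemma vH_Inr[simp]: "vert H (Inr (v,k,j)) = (v,k)"
  by (simp add: expand_def)
lemma oH_Inl[simp]: "opp H (Inl h) = Inl (opp G h)"
  by (simp add: expand_def)
lemma oH_Inr[simp]: "opp H (Inr (v,k,j)) = Inr (v,j,k)"
  by (simp add: expand_def)
lemma cH_Inl: "cyc H (Inl h) = (if valency G (vert G h) = 6 then lab_idx G lab h mod 2 else cyc G h)"
  by (simp add: expand_def)
lemma cH_Inr[simp]: "cyc H (Inr (v,k,j)) = (if j = k mod 3 + 1 then 2 else 3)"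
  by (simp add: expand_def)
lemma hH_Inl[simp]: "Inl h \<in> hedges H \<longleftrightarrow> h \<in> hedges G"
  by (auto simp: expand_def)
lemma hH_Inr[simp]: "Inr (v,k,j) \<in> hedges H \<longleftrightarrow> v \<in> verts G \<and> valency G v = 6 \<and>
   k \<in> {1,2,3} \<and> j \<in> {1,2,3} \<and> k \<noteq> j"
  by (auto simp: expand_def)

lemma hG: "h \<in> hedges G \<Longrightarrow> vert G h \<in> verts G \<and> opp G h \<in> hedges G \<and> opp G h \<noteq> h \<and> opp G (opp G h) = h"
  using sg by (auto simp: star_graph_def)

lemma bijG: "a \<in> verts G \<Longrightarrow> bij_betw (cyc G) (halfedges_at G a) {0..<valency G a}"
  using sg by (auto simp: star_graph_def)

lemma labbij: "v \<in> verts G \<Longrightarrow> valency G v = 6 \<Longrightarrow> bij_betw (lab v) {0..<6} (halfedges_at G v)"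
  using lo by (auto simp: lab_ok_def)

lemma labcyc: "v \<in> verts G \<Longrightarrow> valency G v = 6 \<Longrightarrow>
   (\<exists>r < 6. (\<forall>i < 6. cyc G (lab v i) = (r + i) mod 6) \<or> (\<forall>i < 6. cyc G (lab v i) = (r + 6 - i) mod 6))"
  using lo by (auto simp: lab_ok_def)

lemma lab_in: "v \<in> verts G \<Longrightarrow> valency G v = 6 \<Longrightarrow> i < 6 \<Longrightarrow> lab v i \<in> hedges G \<and> vert G (lab v i) = v"
proof -
  assume v: "v \<in> verts G" "valency G v = 6" "i < 6"
  have "lab v i \<in> halfedges_at G v" using bij_betwE[OF labbij[OF v(1,2)]] v(3) by auto
  thus ?thesis by (simp add: halfedges_at_def)
qed

lemma idx_lab: "v \<in> verts G \<Longrightarrow> valency G v = 6 \<Longrightarrow> i < 6 \<Longrightarrow> lab_idx G lab (lab v i) = i"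
proof -
  assume v: "v \<in> verts G" "valency G v = 6" "i < 6"
  have inj: "inj_on (lab v) {0..<6}" using labbij[OF v(1,2)] by (auto simp: bij_betw_def)
  show ?thesis unfolding lab_idx_def using lab_in[OF v] v(3)
    by (intro the_equality) (auto dest: inj_onD[OF inj])
qed

lemma lab_idx: "h \<in> hedges G \<Longrightarrow> valency G (vert G h) = 6 \<Longrightarrow>
   lab_idx G lab h < 6 \<and> lab (vert G h) (lab_idx G lab h) = h"
proof -
  assume h: "h \<in> hedges G" "valency G (vert G h) = 6"
  have v: "vert G h \<in> verts G" using hG[OF h(1)] by simp
  have "h \<in> lab (vert G h) ` {0..<6}" using labbij[OF v h(2)] h(1)
    by (auto simp: bij_betw_def halfedges_at_def)
  then obtain i where "i < 6" "h = lab (vert G h) i" by auto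
  thus ?thesis using idx_lab[OF v h(2)] by metis
qed

lemma idx_inj: "h \<in> hedges G \<Longrightarrow> h' \<in> hedges G \<Longrightarrow> vert G h = v \<Longrightarrow> vert G h' = v \<Longrightarrow> valency G v = 6 \<Longrightarrow>
  lab_idx G lab h = lab_idx G lab h' \<Longrightarrow> h = h'"
  using lab_idx by metis

lemma cycG_lt: "h \<in> hedges G \<Longrightarrow> cyc G h < valency G (vert G h)"
  using bijG[of "vert G h"] hG[of h] by (auto simp: bij_betw_def halfedges_at_def)

lemma val4: "h \<in> hedges G \<Longrightarrow> valency G (vert G h) \<noteq> 6 \<Longrightarrow> valency G (vert G h) = 4"
  using val hG by blast

lemma cycH_lt4: "u \<in> hedges H \<Longrightarrow> cyc H u < 4"
proof (cases u)
  case (Inl h)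
  assume "u \<in> hedges H"
  thus ?thesis using Inl cycG_lt[of h] val4[of h] by (auto simp: cH_Inl)
next
  case (Inr e) thus ?thesis by (cases e) auto
qed

lemma halfH_0:
  assumes "a \<in> verts G" "valency G a \<noteq> 6"
  shows "halfedges_at H (a, 0) = Inl ` halfedges_at G a"
proof (intro set_eqI iffI)
  fix u assume u: "u \<in> halfedges_at H (a, 0)"
  show "u \<in> Inl ` halfedges_at G a"
  proof (cases u)
    case (Inl h) thus ?thesis using u by (auto simp: halfedges_at_def vH_Inl split: if_splits)
  next
    case (Inr e) thus ?thesis using u by (cases e) (auto simp: halfedges_at_def)
  qed
next
  fix u :: "'h + 'v \<times> nat \<times> nat" assume "u \<in> Inl ` halfedges_at G a"
  thus "u \<in> halfedges_at H (a, 0)" using assms by (auto simp: halfedges_at_def vH_Inl)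
qed

lemma halfH_k:
  assumes v: "v \<in> verts G" "valency G v = 6" and k: "k \<in> {1,2,3::nat}"
  shows "halfedges_at H (v, k) = {Inl (lab v (2*k-2)), Inl (lab v (2*k-1)), Inr (v,k,k mod 3 + 1), Inr (v,k,(k+1) mod 3 + 1)}"
proof (intro set_eqI iffI)
  fix u assume u: "u \<in> halfedges_at H (v, k)"
  show "u \<in> {Inl (lab v (2*k-2)), Inl (lab v (2*k-1)), Inr (v,k,k mod 3 + 1), Inr (v,k,(k+1) mod 3 + 1)}"
  proof (cases u)
    case (Inl h)
    have h: "h \<in> hedges G" "vert H (Inl h) = (v,k)" using u Inl by (auto simp: halfedges_at_def)
    have vh: "valency G (vert G h) = 6" "vert G h = v" "lab_idx G lab h div 2 + 1 = k"
      using h(2) k by (auto simp: vH_Inl split: if_splits)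
    have li: "lab_idx G lab h < 6" "lab v (lab_idx G lab h) = h" using lab_idx[OF h(1) vh(1)] vh(2) by auto
    have "lab_idx G lab h = 2*k-2 \<or> lab_idx G lab h = 2*k-1" using li(1) vh(3) k by auto
    thus ?thesis using li(2) Inl by auto
  next
    case (Inr e)
    then obtain v' k' j where e: "u = Inr (v',k',j)" by (cases e) auto
    thus ?thesis using u k by (auto simp: halfedges_at_def)
  qed
next
  fix u :: "'h + 'v \<times> nat \<times> nat" assume u: "u \<in> {Inl (lab v (2*k-2)), Inl (lab v (2*k-1)), Inr (v,k,k mod 3 + 1), Inr (v,k,(k+1) mod 3 + 1)}"
  have i1: "2*k-2 < 6" "2*k-1 < 6" using k by auto
  have "(2*k-2) div 2 + 1 = k" "(2*k-1) div 2 + 1 = k" using k by auto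
  thus "u \<in> halfedges_at H (v, k)" using u lab_in[OF v i1(1)] lab_in[OF v i1(2)]
      idx_lab[OF v i1(1)] idx_lab[OF v i1(2)] v k
    by (auto simp: halfedges_at_def vH_Inl)
qed

lemma valH_k:
  assumes v: "v \<in> verts G" "valency G v = 6" and k: "k \<in> {1,2,3::nat}"
  shows "valency H (v,k) = 4"
proof -
  have i1: "2*k-2 < 6" "2*k-1 < 6" using k by auto
  have inj: "inj_on (lab v) {0..<6}" using labbij[OF v] by (auto simp: bij_betw_def)
  have "lab v (2*k-2) \<noteq> lab v (2*k-1)" using inj_onD[OF inj, of "2*k-2" "2*k-1"] i1 k by auto
  moreover have "k mod 3 + 1 \<noteq> (k+1) mod 3 + 1" using k by auto
  ultimately show ?thesis unfolding valency_def halfH_k[OF v k] by simp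
qed

lemma valH: "u \<in> hedges H \<Longrightarrow> valency H (vert H u) = 4"
proof (cases u)
  case (Inl h)
  assume u: "u \<in> hedges H"
  hence h: "h \<in> hedges G" using Inl by simp
  show ?thesis
  proof (cases "valency G (vert G h) = 6")
    case True
    have "lab_idx G lab h < 6" using lab_idx[OF h True] by simp
    hence "lab_idx G lab h div 2 + 1 \<in> {1,2,3}" by auto
    thus ?thesis using True Inl valH_k[of "vert G h"] hG[OF h] by (simp add: vH_Inl)
  next
    case False
    have "card (Inl ` halfedges_at G (vert G h) :: ('h + 'v \<times> nat \<times> nat) set) = valency G (vert G h)"
      by (simp add: card_image valency_def)
    thus ?thesis using False Inl halfH_0[of "vert G h"] hG[OF h] val4[OF h False]
      by (simp add: vH_Inl valency_def)
  qed
next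
  case (Inr e)
  assume "u \<in> hedges H"
  thus ?thesis using Inr valH_k by (cases e) auto
qed

end



lemma mcount_card: "mcount a b rr c d qq = card {(m,m'). m \<in> set (mpas a b rr) \<and> m' \<in> set (mpas c d qq) \<and> mcross m m'}"
proof -
  have "{(m,m'). m \<in> set (mpas a b rr) \<and> m' \<in> set (mpas c d qq) \<and> mcross m m'}
     = set (filter (\<lambda>(p,q). mcross p q) (List.product (mpas a b rr) (mpas c d qq)))" by auto
  thus ?thesis unfolding mcount_def by (simp add: length_remdups_card_conv)
qed

lemma zip_map_img: "(\<lambda>(u,w). (f u, w)) ` set (zip xs ys) = set (zip (map f xs) ys)"
  by (simp add: zip_map1)

context ctx
begin

definition code :: "'h + 'v \<times> nat \<times> nat \<Rightarrow> mc" where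
  "code u = (case u of Inl h \<Rightarrow> CL (lab_idx G lab h) | Inr e \<Rightarrow> CR (fst (snd e)) (snd (snd e)))"

definition atv :: "'v \<Rightarrow> 'h + 'v \<times> nat \<times> nat \<Rightarrow> bool" where
  "atv v u = (case u of Inl h \<Rightarrow> h \<in> hedges G \<and> vert G h = v | Inr e \<Rightarrow> fst e = v)"

lemma vH_Inr': "vert H (Inr e) = (fst e, fst (snd e))" by (cases e) auto
lemma oH_Inr': "opp H (Inr e) = Inr (fst e, snd (snd e), fst (snd e))" by (cases e) auto
lemma fst_vH_Inl[simp]: "fst (vert H (Inl h)) = vert G h" by (simp add: vH_Inl)

lemma code_vc:
  assumes "valency G v = 6" "atv v u"
  shows "vert H u = (v, mvert (code u)) \<and> cyc H u = mcyc (code u)"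
proof (cases u)
  case (Inl h) thus ?thesis using assms by (auto simp: atv_def code_def vH_Inl cH_Inl)
next
  case (Inr e) thus ?thesis using assms by (cases e) (auto simp: atv_def code_def)
qed

lemma code_inj:
  assumes "valency G v = 6"
  shows "inj_on code {u. atv v u}"
proof (rule inj_onI)
  fix u u' assume u: "u \<in> {u. atv v u}" and u': "u' \<in> {u. atv v u}" and e: "code u = code u'"
  show "u = u'"
  proof (cases u; cases u')
    fix h h' assume "u = Inl h" "u' = Inl h'"
    thus ?thesis using u u' e assms idx_inj[of h h' v] by (auto simp: atv_def code_def)
  next
    fix e1 e2 assume "u = Inr e1" "u' = Inr e2"
    thus ?thesis using u u' e by (cases e1; cases e2) (auto simp: atv_def code_def)
  qed (use e in \<open>auto simp: code_def\<close>)
qed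

definition segok :: "('h + 'v \<times> nat \<times> nat) set \<Rightarrow> 'h \<times> ('v \<times> nat \<times> nat) list \<times> 'h \<Rightarrow> bool" where
  "segok S s \<longleftrightarrow> set (segl s) \<subseteq> S \<and> (\<forall>(u,w)\<in>lpairs (segl s). vert H (opp H u) = vert H w) \<and> distinct (tailseg s)"

definition Pseg :: "'h \<times> ('v \<times> nat \<times> nat) list \<times> 'h \<Rightarrow> (('h + 'v \<times> nat \<times> nat) \<times> ('h + 'v \<times> nat \<times> nat)) set" where
  "Pseg s = (\<lambda>(u,w). (opp H u, w)) ` lpairs (segl s)"

definition endpas :: "'h \<times> ('v \<times> nat \<times> nat) list \<times> 'h \<Rightarrow> 'h \<times> 'h" where
  "endpas s = (opp G (fst s), snd (snd s))"

lemma lpairs_Cons_sub: "lpairs L \<subseteq> lpairs (u # L)"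
  by (cases L) auto

lemma phi_chain:
  "(\<forall>(u,w)\<in>lpairs (u0 # map Inr r @ [Inl y]). vert H (opp H u) = vert H w) \<Longrightarrow>
   (\<forall>e\<in>set r. fst e = fst (vert H (opp H u0))) \<and> vert G y = fst (vert H (opp H u0))"
proof (induction r arbitrary: u0)
  case Nil
  hence "vert H (opp H u0) = vert H (Inl y)" by simp
  thus ?case by simp
next
  case (Cons e r)
  have h1: "vert H (opp H u0) = vert H (Inr e)" using Cons.prems by simp
  have "\<forall>(u,w)\<in>lpairs (Inr e # map Inr r @ [Inl y]). vert H (opp H u) = vert H w"
    using Cons.prems lpairs_Cons_sub[of "Inr e # map Inr r @ [Inl y]" u0] by auto
  from Cons.IH[OF this] show ?case using h1 by (auto simp: vH_Inr' oH_Inr')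
qed

lemma vchain_seg:
  "(\<forall>(u,w)\<in>lpairs (u0 # map Inr r @ [Inl y]). vert H (opp H u) = vert H w) \<Longrightarrow>
   vert H (opp H u0) = (v,k) \<Longrightarrow> (\<forall>e\<in>set r. fst e = v) \<Longrightarrow> vert H (Inl y) = (v,k') \<Longrightarrow>
   vchain k k' (map (\<lambda>e. (fst (snd e), snd (snd e))) r)"
proof (induction r arbitrary: u0 k)
  case Nil thus ?case by simp
next
  case (Cons e r)
  have h1: "vert H (opp H u0) = vert H (Inr e)" using Cons.prems by simp
  have "\<forall>(u,w)\<in>lpairs (Inr e # map Inr r @ [Inl y]). vert H (opp H u) = vert H w"
    using Cons.prems lpairs_Cons_sub[of "Inr e # map Inr r @ [Inl y]" u0] by auto
  moreover have "vert H (opp H (Inr e)) = (v, snd (snd e))" using Cons.prems by (auto simp: oH_Inr')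
  ultimately have "vchain (snd (snd e)) k' (map (\<lambda>e. (fst (snd e), snd (snd e))) r)"
    using Cons.IH Cons.prems by auto
  moreover have "fst (snd e) = k" using h1 Cons.prems by (auto simp: vH_Inr')
  ultimately show ?case by (cases "snd e") simp
qed

lemma seg_basic:
  assumes S: "S \<subseteq> hedges H" and sok: "segok S s" and s3: "s = (x,r,y)"
  shows "x \<in> hedges G" "y \<in> hedges G" "Inl x \<in> S" "Inl y \<in> S" "\<forall>e\<in>set r. Inr e \<in> S"
    "vert G y = vert G (opp G x)" "\<forall>e\<in>set r. fst e = vert G (opp G x)"
    "\<forall>\<alpha>\<in>Pseg s. snd \<alpha> \<in> S"
    "\<forall>\<alpha>\<in>Pseg s. atv (vert G (opp G x)) (fst \<alpha>) \<and> atv (vert G (opp G x)) (snd \<alpha>)"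
    "\<forall>\<alpha>\<in>Pseg s. fst (vert H (snd \<alpha>)) = vert G (opp G x)"
proof -
  have sub: "set (segl s) \<subseteq> S" using sok by (simp add: segok_def)
  show i1: "Inl x \<in> S" "Inl y \<in> S" "\<forall>e\<in>set r. Inr e \<in> S" using sub s3 by (auto simp: segl_def)
  show hx: "x \<in> hedges G" "y \<in> hedges G" using i1 S by auto
  have ch: "\<forall>(u,w)\<in>lpairs (Inl x # map Inr r @ [Inl y]). vert H (opp H u) = vert H w"
    using sok s3 by (simp add: segok_def segl_def)
  from phi_chain[OF ch]
  show ph: "vert G y = vert G (opp G x)" "\<forall>e\<in>set r. fst e = vert G (opp G x)" by auto
  show "\<forall>\<alpha>\<in>Pseg s. snd \<alpha> \<in> S" using sub unfolding Pseg_def by (auto dest!: lpairs_mem2)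
  have mem: "\<And>u w. (u,w) \<in> lpairs (segl s) \<Longrightarrow> (u = Inl x \<or> u \<in> Inr ` set r) \<and> (w = Inl y \<or> w \<in> Inr ` set r)"
  proof -
    fix u w assume "(u,w) \<in> lpairs (segl s)"
    from lpairs_mem[OF this] show "(u = Inl x \<or> u \<in> Inr ` set r) \<and> (w = Inl y \<or> w \<in> Inr ` set r)"
      using s3 by (auto simp: segl_def butlast_append)
  qed
  have ox: "opp G x \<in> hedges G" using hG[OF hx(1)] by simp
  show "\<forall>\<alpha>\<in>Pseg s. atv (vert G (opp G x)) (fst \<alpha>) \<and> atv (vert G (opp G x)) (snd \<alpha>)"
    unfolding Pseg_def using mem ph hx ox by (fastforce simp: atv_def oH_Inr')
  show "\<forall>\<alpha>\<in>Pseg s. fst (vert H (snd \<alpha>)) = vert G (opp G x)"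
    unfolding Pseg_def using mem ph by (fastforce simp: vH_Inr')
qed

end



lemma img_zip: "map_prod f g ` set (zip xs ys) = set (zip (map f xs) (map g ys))"
  by (simp add: zip_map_map map_prod_def case_prod_beta)

context ctx
begin

lemma alt_inv:
  assumes v: "v \<in> verts G" "valency G v = 6" and i: "a < 6" "b < 6" "c < 6" "d < 6"
  shows "alternating 6 (cyc G (lab v a)) (cyc G (lab v b)) (cyc G (lab v c)) (cyc G (lab v d)) = alternating 6 a b c d"
proof -
  obtain r where r: "r < 6" "(\<forall>i < 6. cyc G (lab v i) = (r + i) mod 6) \<or> (\<forall>i < 6. cyc G (lab v i) = (r + 6 - i) mod 6)"
    using labcyc[OF v] by blast
  have "r \<in> set [0..<6]" "a \<in> set [0..<6]" "b \<in> set [0..<6]" "c \<in> set [0..<6]" "d \<in> set [0..<6]" using r i by auto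
  note R = rotinv[rule_format, OF this]
  from r(2) show ?thesis
  proof
    assume "\<forall>i < 6. cyc G (lab v i) = (r + i) mod 6" thus ?thesis using R i by simp
  next
    assume "\<forall>i < 6. cyc G (lab v i) = (r + 6 - i) mod 6" thus ?thesis using R i by simp
  qed
qed

lemma model_seg:
  assumes S: "S \<subseteq> hedges H" and dS: "S \<inter> opp H ` S = {}" and sok: "segok S s" and s3: "s = (x,r,y)"
    and v: "vert G (opp G x) = v" "valency G v = 6"
  shows "map_prod code code ` Pseg s = set (mpas (lab_idx G lab (opp G x)) (lab_idx G lab y) (map (\<lambda>e. (fst (snd e), snd (snd e))) r))"
    "inj_on (map_prod code code) (Pseg s)"
    "map (\<lambda>e. (fst (snd e), snd (snd e))) r \<in> set (trl_tab (lab_idx G lab (opp G x) div 2 + 1) (lab_idx G lab y div 2 + 1))"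
proof -
  note B = seg_basic[OF S sok s3]
  have "Pseg s = set (zip (map (opp H) (butlast (segl s))) (tl (segl s)))"
    unfolding Pseg_def lpairs_zip zip_tl_butlast zip_map_img ..
  hence "map_prod code code ` Pseg s = set (zip (map code (map (opp H) (butlast (segl s)))) (map code (tl (segl s))))"
    by (simp add: img_zip)
  thus "map_prod code code ` Pseg s = set (mpas (lab_idx G lab (opp G x)) (lab_idx G lab y) (map (\<lambda>e. (fst (snd e), snd (snd e))) r))"
    using s3 by (simp add: mpas_def segl_def butlast_append code_def oH_Inr' o_def case_prod_beta)
  show "inj_on (map_prod code code) (Pseg s)"
  proof (rule inj_onI)
    fix p q assume p: "p \<in> Pseg s" and q: "q \<in> Pseg s" and e: "map_prod code code p = map_prod code code q"
    have a: "atv v (fst p)" "atv v (fst q)" "atv v (snd p)" "atv v (snd q)" using B(9) p q v(1) by auto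
    have "code (fst p) = code (fst q)" "code (snd p) = code (snd q)" using e by (cases p; cases q; simp)+
    hence "fst p = fst q" "snd p = snd q" using inj_onD[OF code_inj[OF v(2)]] a by auto
    thus "p = q" by (simp add: prod_eq_iff)
  qed
  show "map (\<lambda>e. (fst (snd e), snd (snd e))) r \<in> set (trl_tab (lab_idx G lab (opp G x) div 2 + 1) (lab_idx G lab y div 2 + 1))"
  proof -
    define kj where "kj = (\<lambda>e::'v \<times> nat \<times> nat. (fst (snd e), snd (snd e)))"
    have ox: "opp G x \<in> hedges G" using hG[OF B(1)] by simp
    have ia: "lab_idx G lab (opp G x) < 6" using lab_idx[OF ox] v by auto
    have ib: "lab_idx G lab y < 6" using lab_idx[OF B(2)] v B(6) by auto
    have ch: "\<forall>(u,w)\<in>lpairs (Inl x # map Inr r @ [Inl y]). vert H (opp H u) = vert H w"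
      using sok s3 by (simp add: segok_def segl_def)
    have vc: "vchain (lab_idx G lab (opp G x) div 2 + 1) (lab_idx G lab y div 2 + 1) (map kj r)"
      unfolding kj_def
      by (rule vchain_seg[OF ch, of v]) (use v B(6,7) in \<open>auto simp: vH_Inl\<close>)
    have dr: "distinct r" using sok s3 by (simp add: segok_def tailseg_def distinct_map)
    have "inj_on kj (set r)"
    proof (rule inj_onI)
      fix e e' assume "e \<in> set r" "e' \<in> set r" "kj e = kj e'"
      thus "e = e'" using B(7) by (auto simp: kj_def prod_eq_iff)
    qed
    hence dkj: "distinct (map kj r)" using dr by (simp add: distinct_map)
    have ns0: "False" if e: "e \<in> set r" and e': "e' \<in> set r" and eq: "kj e' = (snd (kj e), fst (kj e))" for e e'
    proof -
      have "e' = (fst e, snd (snd e), fst (snd e))" using eq B(7) e e' by (simp add: prod_eq_iff kj_def)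
      hence "Inr e' = opp H (Inr e)" by (simp add: oH_Inr')
      thus False using dS B(5) e e' by auto
    qed
    have ns: "\<forall>(a,b)\<in>set (map kj r). (b,a) \<notin> set (map kj r)"
    proof (intro ballI)
      fix p assume "p \<in> set (map kj r)"
      then obtain e where e: "e \<in> set r" "p = kj e" by auto
      show "case p of (a, b) \<Rightarrow> (b, a) \<notin> set (map kj r)"
        using ns0[OF e(1)] e(2) by (cases p) force
    qed
    have e6: "set (map kj r) \<subseteq> set E6"
    proof
      fix p assume "p \<in> set (map kj r)"
      then obtain e where e: "e \<in> set r" "p = kj e" by auto
      obtain v' k j where "e = (v',k,j)" by (cases e) auto
      moreover have "Inr e \<in> hedges H" using B(5) S e by auto
      ultimately show "p \<in> set E6" using e by (auto simp: kj_def E6_def)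
    qed
    show ?thesis unfolding kj_def[symmetric]
      by (rule trail_mem[OF e6]) (use vc dkj ns ia ib in \<open>auto simp: validtr_def\<close>)
  qed
qed

end



context ctx
begin

lemma pair:
  assumes SA: "SA \<subseteq> hedges H" and SB: "SB \<subseteq> hedges H"
    and dA: "SA \<inter> opp H ` SA = {}" and dB: "SB \<inter> opp H ` SB = {}"
    and dAB: "(SA \<union> opp H ` SA) \<inter> (SB \<union> opp H ` SB) = {}"
    and s: "segok SA s" and t: "segok SB t"
  shows "crP G (endpas s) (endpas t) \<longleftrightarrow> odd (card {(\<alpha>,\<beta>). \<alpha> \<in> Pseg s \<and> \<beta> \<in> Pseg t \<and> crP H \<alpha> \<beta>})"
proof -
  obtain x r y where s3: "s = (x,r,y)" by (cases s) auto
  obtain z q w where t3: "t = (z,q,w)" by (cases t) auto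
  note BA = seg_basic[OF SA s s3] and BB = seg_basic[OF SB t t3]
  define vA where "vA = vert G (opp G x)"
  define vB where "vB = vert G (opp G z)"
  have ox: "opp G x \<in> hedges G" using hG[OF BA(1)] by simp
  have oz: "opp G z \<in> hedges G" using hG[OF BB(1)] by simp
  have vAv: "vA \<in> verts G" using hG[OF ox] vA_def by simp
  let ?C = "{(\<alpha>,\<beta>). \<alpha> \<in> Pseg s \<and> \<beta> \<in> Pseg t \<and> crP H \<alpha> \<beta>}"
  have crG: "crP G (endpas s) (endpas t) \<longleftrightarrow> vA = vB \<and>
     alternating (valency G vA) (cyc G (opp G x)) (cyc G (opp G z)) (cyc G y) (cyc G w)"
    using BA(6) BB(6) s3 t3 by (simp add: crP_def endpas_def vA_def vB_def)
  show ?thesis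
  proof (cases "vA = vB")
    case False
    have "?C = {}"
    proof (rule ccontr)
      assume "?C \<noteq> {}"
      then obtain \<alpha> \<beta> where ab: "\<alpha> \<in> Pseg s" "\<beta> \<in> Pseg t" "crP H \<alpha> \<beta>" by auto
      hence "vert H (snd \<alpha>) = vert H (snd \<beta>)" by (simp add: crP_def)
      hence "fst (vert H (snd \<alpha>)) = fst (vert H (snd \<beta>))" by simp
      thus False using BA(10) BB(10) ab False vA_def vB_def by auto
    qed
    hence "card ?C = 0" by (simp only: card.empty)
    thus ?thesis using crG False by simp
  next
    case True
    have yv: "vert G y = vA" "vert G w = vA" using BA(6) BB(6) True vA_def vB_def by auto
    consider "valency G vA = 6" | "valency G vA = 4" "valency G vA \<noteq> 6" using val vAv by force
    thus ?thesis
    proof cases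
      case 2
      have r0: "r = []"
      proof (rule ccontr)
        assume "r \<noteq> []" then obtain e r' where er: "r = e # r'" by (cases r) auto
        then have "(Inl x, Inr e) \<in> lpairs (segl s)" using s3 by (simp add: segl_def)
        hence "vert H (opp H (Inl x)) = vert H (Inr e)" using s by (auto simp: segok_def)
        moreover have "vert H (opp H (Inl x)) = (vA, 0)" using 2 by (simp add: vH_Inl vA_def)
        moreover have "Inr e \<in> hedges H" using BA(5) SA er by auto
        ultimately show False by (cases e) auto
      qed
      have q0: "q = []"
      proof (rule ccontr)
        assume "q \<noteq> []" then obtain e q' where er: "q = e # q'" by (cases q) auto
        then have "(Inl z, Inr e) \<in> lpairs (segl t)" using t3 by (simp add: segl_def)
        hence "vert H (opp H (Inl z)) = vert H (Inr e)" using t by (auto simp: segok_def)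
        moreover have "vert H (opp H (Inl z)) = (vA, 0)" using 2 True by (simp add: vH_Inl vB_def)
        moreover have "Inr e \<in> hedges H" using BB(5) SB er by auto
        ultimately show False by (cases e) auto
      qed
      have PA: "Pseg s = {(Inl (opp G x), Inl y)}" using s3 r0 by (simp add: Pseg_def segl_def)
      have PB: "Pseg t = {(Inl (opp G z), Inl w)}" using t3 q0 by (simp add: Pseg_def segl_def)
      have vy: "vert H (Inl y) = (vA, 0)" "vert H (Inl w) = (vA, 0)" using yv 2 by (auto simp: vH_Inl)
      have vH4: "valency H (vA, 0) = 4" using valH[of "Inl y"] vy BA(2) by simp
      have cyx: "cyc H (Inl (opp G x)) = cyc G (opp G x)" "cyc H (Inl (opp G z)) = cyc G (opp G z)"
        "cyc H (Inl y) = cyc G y" "cyc H (Inl w) = cyc G w"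
        using 2 yv True by (auto simp: cH_Inl vA_def vB_def)
      have eqv: "crP H (Inl (opp G x), Inl y) (Inl (opp G z), Inl w) \<longleftrightarrow> crP G (endpas s) (endpas t)"
        unfolding crG using vy vH4 cyx 2 True by (simp add: crP_def[of H])
      have "?C = (if crP G (endpas s) (endpas t) then {((Inl (opp G x), Inl y), (Inl (opp G z), Inl w))} else {})"
        using PA PB eqv by auto
      thus ?thesis by simp
    next
      case 1
      define a where "a = lab_idx G lab (opp G x)"
      define b where "b = lab_idx G lab y"
      define c where "c = lab_idx G lab (opp G z)"
      define d where "d = lab_idx G lab w"
      define rr where "rr = map (\<lambda>e. (fst (snd e), snd (snd e))) r"
      define qq where "qq = map (\<lambda>e. (fst (snd e), snd (snd e))) q"
      have vz: "vert G (opp G z) = vA" using True vB_def by simp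
      note MA = model_seg[OF SA dA s s3 vA_def[symmetric] 1, folded a_def b_def rr_def]
      note MB = model_seg[OF SB dB t t3 vz 1, folded c_def d_def qq_def]
      have la: "a < 6" "lab vA a = opp G x" using lab_idx[OF ox] 1 vA_def a_def by auto
      have lb: "b < 6" "lab vA b = y" using lab_idx[OF BA(2)] 1 yv b_def by auto
      have lc: "c < 6" "lab vA c = opp G z" using lab_idx[OF oz] 1 vz c_def by auto
      have ld: "d < 6" "lab vA d = w" using lab_idx[OF BB(2)] 1 yv d_def by auto
      define \<mu> where "\<mu> = map_prod code code"
      define F where "F = (\<lambda>(\<alpha>,\<beta>). (\<mu> \<alpha>, \<mu> \<beta>))"
      have key: "crP H \<alpha> \<beta> \<longleftrightarrow> mcross (\<mu> \<alpha>) (\<mu> \<beta>)" if ab: "\<alpha> \<in> Pseg s" "\<beta> \<in> Pseg t" for \<alpha> \<beta>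
      proof -
        have at: "atv vA (fst \<alpha>)" "atv vA (snd \<alpha>)" "atv vA (fst \<beta>)" "atv vA (snd \<beta>)"
          using BA(9) BB(9) ab vA_def vz by auto
        note cv = code_vc[OF 1 at(1)] code_vc[OF 1 at(2)] code_vc[OF 1 at(3)] code_vc[OF 1 at(4)]
        have "valency H (vert H (snd \<alpha>)) = 4" using valH BA(8) SA ab by auto
        thus ?thesis using cv by (cases \<alpha>; cases \<beta>) (auto simp: crP_def mcross_def \<mu>_def)
      qed
      have injF: "inj_on F ?C"
        using MA(2) MB(2) unfolding F_def \<mu>_def by (auto intro!: inj_onI dest: inj_onD)
      have imF: "F ` ?C = {(m,m'). m \<in> set (mpas a b rr) \<and> m' \<in> set (mpas c d qq) \<and> mcross m m'}"
      proof (intro set_eqI iffI)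
        fix p assume "p \<in> F ` ?C"
        then obtain \<alpha> \<beta> where "\<alpha> \<in> Pseg s" "\<beta> \<in> Pseg t" "crP H \<alpha> \<beta>" "p = (\<mu> \<alpha>, \<mu> \<beta>)"
          by (auto simp: F_def)
        thus "p \<in> {(m,m'). m \<in> set (mpas a b rr) \<and> m' \<in> set (mpas c d qq) \<and> mcross m m'}"
          using key MA(1) MB(1) \<mu>_def by auto
      next
        fix p assume "p \<in> {(m,m'). m \<in> set (mpas a b rr) \<and> m' \<in> set (mpas c d qq) \<and> mcross m m'}"
        then obtain m m' where p: "p = (m,m')" "m \<in> \<mu> ` Pseg s" "m' \<in> \<mu> ` Pseg t" "mcross m m'"
          using MA(1) MB(1) \<mu>_def by auto
        then obtain \<alpha> \<beta> where "\<alpha> \<in> Pseg s" "\<beta> \<in> Pseg t" "m = \<mu> \<alpha>" "m' = \<mu> \<beta>" by auto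
        moreover hence "crP H \<alpha> \<beta>" using p(4) key by simp
        ultimately show "p \<in> F ` ?C" using p(1) by (auto simp: F_def intro!: image_eqI[of _ _ "(\<alpha>,\<beta>)"])
      qed
      have cardC: "card ?C = mcount a b rr c d qq"
        using card_image[OF injF] imF mcount_card by simp
      have gside: "crP G (endpas s) (endpas t) \<longleftrightarrow> alternating 6 a c b d"
        using crG True 1 alt_inv[OF vAv 1 la(1) lc(1) lb(1) ld(1)] la lb lc ld by simp
      have io: "Inl (opp G x) \<in> opp H ` SA" "Inl (opp G z) \<in> opp H ` SB"
        using BA(3) BB(3) by (auto intro!: image_eqI[of _ "opp H" "Inl _"])
      have "x \<noteq> z" using BA(3) BB(3) dAB by auto
      hence oxz: "opp G x \<noteq> opp G z" using hG[OF BA(1)] hG[OF BB(1)] by metis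
      have hd: "opp G x \<noteq> y" "opp G x \<noteq> opp G z" "opp G x \<noteq> w" "y \<noteq> opp G z" "y \<noteq> w" "opp G z \<noteq> w"
        using io BA(4) BB(4) dA dB dAB oxz by auto
      have dis: "distinct [a,b,c,d]" using hd la lb lc ld by auto
      have ed: "edisj rr qq"
        unfolding edisj_def
      proof (intro ballI)
        fix p assume "p \<in> set rr"
        then obtain e where e: "e \<in> set r" "p = (fst (snd e), snd (snd e))" by (auto simp: rr_def)
        have e1: "Inr e \<in> SA" "opp H (Inr e) \<in> opp H ` SA" using BA(5) e by auto
        have ev: "fst e = vA" using BA(7) e vA_def by auto
        show "case p of (k, j) \<Rightarrow> (k, j) \<notin> set qq \<and> (j, k) \<notin> set qq"
        proof (cases p)
          case (Pair k j)
          have "(k,j) \<notin> set qq"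
          proof
            assume "(k,j) \<in> set qq"
            then obtain e' where "e' \<in> set q" "(k,j) = (fst (snd e'), snd (snd e'))" by (auto simp: qq_def)
            moreover hence "fst e' = vA" using BB(7) vz by auto
            ultimately have "Inr e \<in> SB" using BB(5) e Pair ev by (metis prod.collapse)
            thus False using e1 dAB by auto
          qed
          moreover have "(j,k) \<notin> set qq"
          proof
            assume "(j,k) \<in> set qq"
            then obtain e' where "e' \<in> set q" "(j,k) = (fst (snd e'), snd (snd e'))" by (auto simp: qq_def)
            moreover have "fst e' = vA" using BB(7) vz \<open>e' \<in> set q\<close> by auto
            ultimately have "e' = (fst e, snd (snd e), fst (snd e))" using ev Pair e by (auto simp: prod_eq_iff)
            hence "opp H (Inr e) = Inr e'" by (simp add: oH_Inr')
            hence "opp H (Inr e) \<in> SB" using BB(5) \<open>e' \<in> set q\<close> by auto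
            thus False using e1 dAB by auto
          qed
          ultimately show ?thesis using Pair by simp
        qed
      qed
      have mem: "a \<in> set [0..<6]" "b \<in> set [0..<6]" "c \<in> set [0..<6]" "d \<in> set [0..<6]"
        using la lb lc ld by auto
      have "alternating 6 a c b d \<longleftrightarrow> odd (mcount a b rr c d qq)"
        using modelcheck[rule_format, OF mem dis MA(3) MB(3) ed] .
      thus ?thesis using gside cardC by simp
    qed
  qed
qed

end



lemma alt4_check: "\<forall>a\<in>set [0..<4]. \<forall>b\<in>set [0..<4]. \<forall>c\<in>set [0..<4]. \<forall>d\<in>set [0..<4].
   alternating 4 a b c d \<longrightarrow> \<not> (a \<in> {2,3} \<and> c \<in> {2,3}) \<and> \<not> (b \<in> {2,3} \<and> d \<in> {2,3})"
  by code_simp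

lemma alt4: "alternating 4 a b c d \<Longrightarrow> a < 4 \<Longrightarrow> b < 4 \<Longrightarrow> c < 4 \<Longrightarrow> d < 4 \<Longrightarrow>
   \<not> (a \<in> {2,3} \<and> c \<in> {2,3}) \<and> \<not> (b \<in> {2,3} \<and> d \<in> {2,3})"
  using alt4_check by auto

lemma distinct_rot1: "xs \<noteq> [] \<Longrightarrow> distinct xs \<Longrightarrow> distinct (tl xs @ [hd xs])"
  by (cases xs) auto

lemma finite_lpairs: "finite (lpairs L)"
  by (simp add: lpairs_zip)

lemma cpairs_set: "(u,w) \<in> cpairs C \<Longrightarrow> u \<in> set C \<and> w \<in> set C"
proof -
  assume "(u,w) \<in> cpairs C"
  then obtain i where i: "i < length C" "u = C!i" "w = C!((i+1) mod length C)" by (auto simp: cpairs_def)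
  have "(i+1) mod length C < length C" using i(1) by (intro mod_less_divisor) linarith
  thus ?thesis using i by auto
qed

context ctx
begin

lemma oH_hedges: "u \<in> hedges H \<Longrightarrow> opp H u \<in> hedges H"
proof (cases u)
  case (Inl h) assume "u \<in> hedges H" thus ?thesis using Inl hG[of h] by simp
next
  case (Inr e) assume "u \<in> hedges H" thus ?thesis using Inr by (cases e) auto
qed

lemma r23: "\<not> isl p \<Longrightarrow> cyc H p \<in> {2,3} \<and> cyc H (opp H p) \<in> {2,3}"
proof (cases p)
  case (Inr e) thus ?thesis by (cases e) auto
qed simp

lemma cyc_basic:
  assumes "is_cycle H C"
  shows "C \<noteq> []" "distinct C" "set C \<subseteq> hedges H" "set C \<inter> opp H ` set C = {}"
    "\<forall>(u,w)\<in>cpairs C. vert H (opp H u) = vert H w"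
    "edges_of H C = set C \<union> opp H ` set C"
proof -
  show "C \<noteq> []" "set C \<subseteq> hedges H" using assms by (auto simp: is_cycle_def)
  show "distinct C" "set C \<inter> opp H ` set C = {}" using assms by (auto simp: is_cycle_def)
  show "\<forall>(u,w)\<in>cpairs C. vert H (opp H u) = vert H w" using assms
    by (auto simp: is_cycle_def cpairs_def)
  show "edges_of H C = set C \<union> opp H ` set C" by (simp add: edges_of_def)
qed

lemma noInl:
  assumes A: "is_cycle H A" and B: "is_cycle H B" and nA: "(\<forall>u\<in>set A. \<not> isl u) \<or> (\<forall>u\<in>set B. \<not> isl u)"
  shows "crossings H A B = 0"
proof -
  note CA = cyc_basic[OF A] and CB = cyc_basic[OF B]
  have e: "{(\<alpha>,\<beta>). \<alpha> \<in> pas H A \<and> \<beta> \<in> pas H B \<and> crP H \<alpha> \<beta>} = {}"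
  proof (rule ccontr)
    assume "{(\<alpha>,\<beta>). \<alpha> \<in> pas H A \<and> \<beta> \<in> pas H B \<and> crP H \<alpha> \<beta>} \<noteq> {}"
    then obtain \<alpha> \<beta> where ab: "\<alpha> \<in> pas H A" "\<beta> \<in> pas H B" "crP H \<alpha> \<beta>" by auto
    obtain u w where uw: "(u,w) \<in> cpairs A" "\<alpha> = (opp H u, w)" using ab(1) by (auto simp: pas_def)
    obtain u' w' where uw': "(u',w') \<in> cpairs B" "\<beta> = (opp H u', w')" using ab(2) by (auto simp: pas_def)
    have mem: "u \<in> set A" "w \<in> set A" "u' \<in> set B" "w' \<in> set B" using uw(1) uw'(1)
      by (auto dest: cpairs_set)
    have hh: "opp H u \<in> hedges H" "w \<in> hedges H" "opp H u' \<in> hedges H" "w' \<in> hedges H"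
      using mem CA(3) CB(3) oH_hedges by auto
    have lt: "cyc H (opp H u) < 4" "cyc H w < 4" "cyc H (opp H u') < 4" "cyc H w' < 4"
      using hh cycH_lt4 by auto
    have al: "alternating 4 (cyc H (opp H u)) (cyc H (opp H u')) (cyc H w) (cyc H w')"
      using ab(3) uw(2) uw'(2) valH[OF hh(2)] by (simp add: crP_def)
    note A4 = alt4[OF al lt(1,3,2,4)]
    from nA show False
    proof
      assume "\<forall>u\<in>set A. \<not> isl u"
      hence "\<not> isl u" "\<not> isl w" using mem by auto
      thus False using A4 r23[of u] r23[of w] by blast
    next
      assume "\<forall>u\<in>set B. \<not> isl u"
      hence "\<not> isl u'" "\<not> isl w'" using mem by auto
      thus False using A4 r23[of u'] r23[of w'] by blast
    qed
  qed
  have "crossings H A B = card {(\<alpha>,\<beta>). \<alpha> \<in> pas H A \<and> \<beta> \<in> pas H B \<and> crP H \<alpha> \<beta>}"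
    by (rule crossings_pas[OF CA(2) CB(2)])
  also have "\<dots> = 0" by (simp only: e card.empty)
  finally show ?thesis .
qed

lemma cyc_decomp:
  assumes C: "is_cycle H C" and ex: "\<exists>u\<in>set C. isl u"
  obtains Cg segsC where "Cg \<noteq> []" "distinct Cg" "\<forall>x\<in>set Cg. Inl x \<in> set C"
    "pas H C = (\<Union>s\<in>set segsC. Pseg s)" "pas G Cg = endpas ` set segsC"
    "\<forall>s\<in>set segsC. segok (set C) s"
    "\<forall>s\<in>set segsC. \<forall>s'\<in>set segsC. s \<noteq> s' \<longrightarrow> Pseg s \<inter> Pseg s' = {}"
    "inj_on endpas (set segsC)"
    "cpairs Cg = (\<lambda>(x,r,y). (x,y)) ` set segsC"
proof -
  note CC = cyc_basic[OF C]
  obtain i where i: "i < length C" "isl (C ! i)" using ex by (auto simp: in_set_conv_nth)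
  define C2 where "C2 = rotate i C"
  have C2ne: "C2 \<noteq> []" using CC(1) by (simp add: C2_def)
  have hd2: "isl (hd C2)" using i CC(1) by (simp add: C2_def hd_rotate_conv_nth)
  have set2: "set C2 = set C" by (simp add: C2_def)
  have dist2: "distinct C2" using CC(2) by (simp add: C2_def)
  have cp2: "cpairs C2 = cpairs C" by (simp add: C2_def cpairs_rotate)
  obtain bl where bl: "bl \<noteq> []" "C2 = concat (map blk bl)" using block_decomp[OF C2ne hd2] by blast
  define x0 where "x0 = fst (hd bl)"
  define segsC where "segsC = segs bl x0"
  define Cg where "Cg = map fst bl"
  have hdC2: "hd C2 = Inl x0" using bl by (cases bl) (auto simp: blk_def x0_def)
  have cpC: "cpairs C = (\<Union>s\<in>set segsC. lpairs (segl s))"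
    using cp2[symmetric] cpairs_lpairs[OF C2ne] hdC2 L1[OF bl(1)] bl(2) by (simp add: segsC_def)
  have Cgne: "Cg \<noteq> []" using bl by (simp add: Cg_def)
  have fb: "filter isl C2 = map Inl Cg" using filter_blk[of bl] bl(2) by (simp add: Cg_def)
  have distCg: "distinct Cg"
  proof -
    have "distinct (map Inl Cg :: ('h + 'v \<times> nat \<times> nat) list)" using fb dist2 by (metis distinct_filter)
    thus ?thesis by (simp add: distinct_map)
  qed
  have inC: "\<forall>x\<in>set Cg. Inl x \<in> set C"
  proof
    fix x assume "x \<in> set Cg"
    hence "Inl x \<in> set (filter isl C2)" using fb by simp
    thus "Inl x \<in> set C" using set2 by simp
  qed
  have pasH: "pas H C = (\<Union>s\<in>set segsC. Pseg s)" unfolding pas_def Pseg_def cpC by auto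
  have hdCg: "hd Cg = x0" using bl by (cases bl) (auto simp: Cg_def x0_def)
  have cpCg: "cpairs Cg = (\<lambda>(x,r,y). (x,y)) ` set segsC"
    using cpairs_lpairs[OF Cgne] hdCg L2[OF bl(1), of x0] by (simp add: segsC_def Cg_def)
  have pasG: "pas G Cg = endpas ` set segsC"
    unfolding pas_def cpCg image_comp by (rule image_cong) (auto simp: endpas_def)
  have tl_eq: "concat (map tailseg segsC) = tl C2 @ [hd C2]"
    using concat_blk_append[OF bl(1), of x0] bl(2) hdC2
    by (metis append_Cons list.sel(3) C2ne hd_Cons_tl segsC_def tl_append2 list.distinct(1))
  have dtl: "distinct (concat (map tailseg segsC))"
    using tl_eq distinct_rot1[OF C2ne dist2] by simp
  have tsne: "[] \<notin> set (map tailseg segsC)" by (auto simp: tailseg_def)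
  have DC: "distinct (map tailseg segsC)" "\<forall>ys\<in>set (map tailseg segsC). distinct ys"
    "\<forall>ys zs. ys \<in> set (map tailseg segsC) \<and> zs \<in> set (map tailseg segsC) \<and> ys \<noteq> zs \<longrightarrow> set ys \<inter> set zs = {}"
    using dtl tsne unfolding distinct_concat_iff by (auto simp: removeAll_id)
  have tinj: "inj_on tailseg (set segsC)" using DC(1) by (simp add: distinct_map)
  have sub: "set (segl s) \<subseteq> set C" if s: "s \<in> set segsC" for s
  proof -
    have "length (segl s) \<ge> 2" by (simp add: segl_def)
    from set_lpairs[OF this] have "set (segl s) \<subseteq> fst ` lpairs (segl s) \<union> snd ` lpairs (segl s)" .
    moreover have "lpairs (segl s) \<subseteq> cpairs C" using s cpC by auto
    moreover have "cpairs C \<subseteq> set C \<times> set C" by (auto dest: cpairs_set)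
    ultimately show ?thesis by force
  qed
  have sok: "\<forall>s\<in>set segsC. segok (set C) s"
  proof
    fix s assume s: "s \<in> set segsC"
    have "lpairs (segl s) \<subseteq> cpairs C" using s cpC by auto
    hence "\<forall>(u,w)\<in>lpairs (segl s). vert H (opp H u) = vert H w" using CC(5) by auto
    thus "segok (set C) s" using sub[OF s] DC(2) s by (auto simp: segok_def)
  qed
  have psnd: "snd \<alpha> \<in> set (tailseg s)" if aP: "\<alpha> \<in> Pseg s" for \<alpha> s
  proof -
    obtain p where p: "p \<in> lpairs (segl s)" "\<alpha> = (\<lambda>(u,w). (opp H u, w)) p" using aP unfolding Pseg_def by blast
    obtain a b where pab: "p = (a,b)" by (cases p)
    have ab: "(a,b) \<in> lpairs (segl s)" "\<alpha> = (opp H a, b)" using p pab by auto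
    have "tl (segl s) = tailseg s" by (simp add: segl_def tailseg_def)
    thus ?thesis using lpairs_mem[OF ab(1)] ab(2) by simp
  qed
  have pdis: "\<forall>s\<in>set segsC. \<forall>s'\<in>set segsC. s \<noteq> s' \<longrightarrow> Pseg s \<inter> Pseg s' = {}"
  proof (intro ballI impI)
    fix s s' assume s: "s \<in> set segsC" "s' \<in> set segsC" "s \<noteq> s'"
    have "tailseg s \<noteq> tailseg s'" using s inj_onD[OF tinj] by blast
    hence "set (tailseg s) \<inter> set (tailseg s') = {}" using DC(3) s by auto
    thus "Pseg s \<inter> Pseg s' = {}" using psnd by blast
  qed
  have f3: "map (\<lambda>(x,r,y). x) segsC = Cg"
  proof -
    have "map (\<lambda>(x,r,y). x) segsC = map fst (map (\<lambda>(x,r,y). (x,r)) segsC)" by (induction segsC) auto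
    thus ?thesis using L3[of bl x0] by (simp add: segsC_def Cg_def)
  qed
  have "distinct (map (\<lambda>(x,r,y). x) segsC)" using f3 distCg by simp
  hence f3inj: "inj_on (\<lambda>(x,r,y). x) (set segsC)" by (simp add: distinct_map)
  have einj: "inj_on endpas (set segsC)"
  proof (rule inj_onI)
    fix s s' assume s: "s \<in> set segsC" "s' \<in> set segsC" and e: "endpas s = endpas s'"
    have "Inl (fst s) \<in> set C" "Inl (fst s') \<in> set C" using sub s by (auto simp: segl_def)
    hence "fst s \<in> hedges G" "fst s' \<in> hedges G" using CC(3) by auto
    hence "fst s = fst s'" using e hG by (metis endpas_def prod.inject)
    thus "s = s'" using inj_onD[OF f3inj] s by (cases s; cases s') auto
  qed
  show thesis using that[OF Cgne distCg inC pasH pasG sok pdis einj cpCg] .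
qed

end



context ctx
begin

lemma proj_cycle:
  assumes C: "is_cycle H C" and ne: "Cg \<noteq> []" and dC: "distinct Cg" and inC: "\<forall>x\<in>set Cg. Inl x \<in> set C"
    and sok: "\<forall>s\<in>set segsC. segok (set C) s" and cp: "cpairs Cg = (\<lambda>(x,r,y). (x,y)) ` set segsC"
  shows "is_cycle G Cg"
proof -
  note CC = cyc_basic[OF C]
  have hg: "set Cg \<subseteq> hedges G" using inC CC(3) by auto
  have inj: "inj_on (opp G) (set Cg)"
  proof (rule inj_onI)
    fix a b assume ab: "a \<in> set Cg" "b \<in> set Cg" "opp G a = opp G b"
    have "opp G (opp G a) = a" "opp G (opp G b) = b" using ab(1,2) hg hG by auto
    thus "a = b" using ab(3) by metis
  qed
  have disj: "set Cg \<inter> opp G ` set Cg = {}"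
  proof (rule ccontr)
    assume "set Cg \<inter> opp G ` set Cg \<noteq> {}"
    then obtain x x' where "x \<in> set Cg" "x' \<in> set Cg" "x = opp G x'" by auto
    hence "Inl x \<in> set C" "Inl x \<in> opp H ` set C" using inC by (auto intro!: image_eqI[of _ "opp H" "Inl x'"])
    thus False using CC(4) by auto
  qed
  have dist: "distinct (Cg @ map (opp G) Cg)" using dC inj disj by (simp add: distinct_map)
  have conn: "\<forall>i < length Cg. vert G (opp G (Cg ! i)) = vert G (Cg ! ((i + 1) mod length Cg))"
  proof (intro allI impI)
    fix i assume i: "i < length Cg"
    have "(Cg ! i, Cg ! ((i + 1) mod length Cg)) \<in> cpairs Cg" using i by (auto simp: cpairs_def)
    then obtain x r y where s: "(x,r,y) \<in> set segsC" "Cg ! i = x" "Cg ! ((i + 1) mod length Cg) = y"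
      using cp by auto
    have "vert G y = vert G (opp G x)" using seg_basic(6)[OF CC(3) _ refl] sok s(1) by auto
    thus "vert G (opp G (Cg ! i)) = vert G (Cg ! ((i + 1) mod length Cg))" using s by simp
  qed
  show ?thesis unfolding is_cycle_def using ne hg dist conn by simp
qed

lemma main:
  assumes A': "is_cycle H A'" and B': "is_cycle H B'" and ed: "edge_disjoint H A' B'"
    and c1: "crossings H A' B' = 1"
  shows "has_vassiliev_obstruct G"
proof -
  note CA = cyc_basic[OF A'] and CB = cyc_basic[OF B']
  have exA: "\<exists>u\<in>set A'. isl u" using noInl[OF A' B'] c1 by auto
  have exB: "\<exists>u\<in>set B'. isl u" using noInl[OF A' B'] c1 by auto
  obtain A segsA where DA: "A \<noteq> []" "distinct A" "\<forall>x\<in>set A. Inl x \<in> set A'"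
    "pas H A' = (\<Union>s\<in>set segsA. Pseg s)" "pas G A = endpas ` set segsA"
    "\<forall>s\<in>set segsA. segok (set A') s"
    "\<forall>s\<in>set segsA. \<forall>s'\<in>set segsA. s \<noteq> s' \<longrightarrow> Pseg s \<inter> Pseg s' = {}"
    "inj_on endpas (set segsA)" "cpairs A = (\<lambda>(x,r,y). (x,y)) ` set segsA"
    by (rule cyc_decomp[OF A' exA])
  obtain B segsB where DB: "B \<noteq> []" "distinct B" "\<forall>x\<in>set B. Inl x \<in> set B'"
    "pas H B' = (\<Union>s\<in>set segsB. Pseg s)" "pas G B = endpas ` set segsB"
    "\<forall>s\<in>set segsB. segok (set B') s"
    "\<forall>s\<in>set segsB. \<forall>s'\<in>set segsB. s \<noteq> s' \<longrightarrow> Pseg s \<inter> Pseg s' = {}"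
    "inj_on endpas (set segsB)" "cpairs B = (\<lambda>(x,r,y). (x,y)) ` set segsB"
    by (rule cyc_decomp[OF B' exB])
  have dAB: "(set A' \<union> opp H ` set A') \<inter> (set B' \<union> opp H ` set B') = {}"
    using ed CA(6) CB(6) by (simp add: edge_disjoint_def)
  have cycA: "is_cycle G A" using proj_cycle[OF A' DA(1,2,3,6,9)] .
  have cycB: "is_cycle G B" using proj_cycle[OF B' DB(1,2,3,6,9)] .
  have edG: "edge_disjoint G A B"
  proof -
    have gen: "Inl ` edges_of G Cg \<subseteq> set C \<union> opp H ` set C" if inC: "\<forall>x\<in>set Cg. Inl x \<in> set C" for Cg C
    proof
      fix u :: "'h + 'v \<times> nat \<times> nat" assume "u \<in> Inl ` edges_of G Cg"
      then obtain h where h: "h \<in> set Cg \<or> h \<in> opp G ` set Cg" "u = Inl h" by (auto simp: edges_of_def)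
      from h(1) show "u \<in> set C \<union> opp H ` set C"
      proof
        assume "h \<in> set Cg" thus ?thesis using inC h(2) by auto
      next
        assume "h \<in> opp G ` set Cg"
        then obtain x where x: "x \<in> set Cg" "h = opp G x" by auto
        hence "u = opp H (Inl x)" using h(2) by simp
        moreover have "Inl x \<in> set C" using inC x(1) by auto
        ultimately show ?thesis by blast
      qed
    qed
    have "Inl ` edges_of G A \<subseteq> set A' \<union> opp H ` set A'" using gen DA(3) by blast
    moreover have "Inl ` edges_of G B \<subseteq> set B' \<union> opp H ` set B'" using gen DB(3) by blast
    ultimately have "Inl ` edges_of G A \<inter> Inl ` edges_of G B = ({} :: ('h + 'v \<times> nat \<times> nat) set)"
      using dAB by blast
    thus ?thesis by (auto simp: edge_disjoint_def)
  qed
  define J where "J = set segsA \<times> set segsB"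
  define C where "C = (\<lambda>p. {(\<alpha>,\<beta>). \<alpha> \<in> Pseg (fst p) \<and> \<beta> \<in> Pseg (snd p) \<and> crP H \<alpha> \<beta>})"
  define I where "I = {p \<in> J. crP G (endpas (fst p)) (endpas (snd p))}"
  have finJ: "finite J" by (simp add: J_def)
  have finP: "finite (Pseg s)" for s by (simp add: Pseg_def finite_lpairs)
  have finC: "\<forall>p\<in>J. finite (C p)"
  proof
    fix p assume "p \<in> J"
    have "C p \<subseteq> Pseg (fst p) \<times> Pseg (snd p)" by (auto simp: C_def)
    thus "finite (C p)" using finP by (meson finite_SigmaI rev_finite_subset)
  qed
  have disC: "\<forall>p\<in>J. \<forall>p'\<in>J. p \<noteq> p' \<longrightarrow> C p \<inter> C p' = {}"
  proof (intro ballI impI)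
    fix p p' assume p: "p \<in> J" "p' \<in> J" "p \<noteq> p'"
    show "C p \<inter> C p' = {}"
    proof (cases "fst p = fst p'")
      case True
      hence "snd p \<noteq> snd p'" using p(3) by (simp add: prod_eq_iff)
      moreover have "snd p \<in> set segsB" "snd p' \<in> set segsB" using p by (simp_all add: J_def mem_Times_iff)
      ultimately have "Pseg (snd p) \<inter> Pseg (snd p') = {}" using DB(7) by blast
      thus ?thesis unfolding C_def by blast
    next
      case False
      moreover have "fst p \<in> set segsA" "fst p' \<in> set segsA" using p by (simp_all add: J_def mem_Times_iff)
      ultimately have "Pseg (fst p) \<inter> Pseg (fst p') = {}" using DA(7) by blast
      thus ?thesis unfolding C_def by blast
    qed
  qed
  have S'eq: "{(\<alpha>,\<beta>). \<alpha> \<in> pas H A' \<and> \<beta> \<in> pas H B' \<and> crP H \<alpha> \<beta>} = (\<Union>p\<in>J. C p)"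
    unfolding DA(4) DB(4) J_def C_def by auto
  have "1 = crossings H A' B'" using c1 by simp
  also have "\<dots> = card {(\<alpha>,\<beta>). \<alpha> \<in> pas H A' \<and> \<beta> \<in> pas H B' \<and> crP H \<alpha> \<beta>}"
    by (rule crossings_pas[OF CA(2) CB(2)])
  also have "\<dots> = card (\<Union>p\<in>J. C p)" by (simp only: S'eq)
  also have "\<dots> = (\<Sum>p\<in>J. card (C p))" using card_UN_disjoint[OF finJ] finC disC by blast
  finally have sum1: "(\<Sum>p\<in>J. card (C p)) = 1" by simp
  have par: "\<forall>p\<in>J. crP G (endpas (fst p)) (endpas (snd p)) \<longleftrightarrow> odd (card (C p))"
  proof
    fix p assume p: "p \<in> J"
    have "fst p \<in> set segsA" "snd p \<in> set segsB" using p by (simp_all add: J_def mem_Times_iff)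
    hence "segok (set A') (fst p)" "segok (set B') (snd p)" using DA(6) DB(6) by auto
    from pair[OF CA(3) CB(3) CA(4) CB(4) dAB this]
    show "crP G (endpas (fst p)) (endpas (snd p)) \<longleftrightarrow> odd (card (C p))" by (simp add: C_def)
  qed
  have "\<exists>a\<in>J. card (C a) = 1 \<and> (\<forall>b\<in>J. a \<noteq> b \<longrightarrow> card (C b) = 0)"
    using sum1 by (simp only: sum_eq_1_iff[OF finJ])
  then obtain p0 where p0: "p0 \<in> J" "card (C p0) = 1" "\<forall>p\<in>J. p0 \<noteq> p \<longrightarrow> card (C p) = 0"
    by blast
  have Ieq: "I = {p0}"
  proof
    have "crP G (endpas (fst p0)) (endpas (snd p0))" using p0(1,2) par by simp
    thus "{p0} \<subseteq> I" using p0(1) by (simp add: I_def)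
    show "I \<subseteq> {p0}"
    proof
      fix p assume "p \<in> I"
      hence pJ: "p \<in> J" "crP G (endpas (fst p)) (endpas (snd p))" by (simp_all add: I_def)
      hence "odd (card (C p))" using par by simp
      hence "card (C p) \<noteq> 0" by presburger
      hence "p = p0" using p0(3) pJ(1) by metis
      thus "p \<in> {p0}" by simp
    qed
  qed
  define F where "F = (\<lambda>p. (endpas (fst p), endpas (snd p)))"
  have injF: "inj_on F I"
  proof (rule inj_onI)
    fix p p' assume p: "p \<in> I" "p' \<in> I" and e: "F p = F p'"
    have m: "fst p \<in> set segsA" "snd p \<in> set segsB" "fst p' \<in> set segsA" "snd p' \<in> set segsB"
      using p by (simp_all add: I_def J_def mem_Times_iff)
    have "endpas (fst p) = endpas (fst p')" "endpas (snd p) = endpas (snd p')" using e by (simp_all add: F_def)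
    hence "fst p = fst p'" "snd p = snd p'" using inj_onD[OF DA(8)] inj_onD[OF DB(8)] m by auto
    thus "p = p'" by (simp add: prod_eq_iff)
  qed
  have Seq: "{(\<alpha>,\<beta>). \<alpha> \<in> pas G A \<and> \<beta> \<in> pas G B \<and> crP G \<alpha> \<beta>} = F ` I"
  proof (intro set_eqI iffI)
    fix z assume "z \<in> {(\<alpha>,\<beta>). \<alpha> \<in> pas G A \<and> \<beta> \<in> pas G B \<and> crP G \<alpha> \<beta>}"
    then obtain \<alpha> \<beta> where z: "z = (\<alpha>,\<beta>)" "\<alpha> \<in> pas G A" "\<beta> \<in> pas G B" "crP G \<alpha> \<beta>" by blast
    obtain s where s: "s \<in> set segsA" "\<alpha> = endpas s" using z(2) DA(5) by auto
    obtain t where t: "t \<in> set segsB" "\<beta> = endpas t" using z(3) DB(5) by auto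
    have "(s,t) \<in> I" using s t z(4) by (simp add: I_def J_def)
    moreover have "z = F (s,t)" using z s t by (simp add: F_def)
    ultimately show "z \<in> F ` I" by blast
  next
    fix z assume "z \<in> F ` I"
    then obtain p where p: "p \<in> I" "z = F p" by blast
    have m: "fst p \<in> set segsA" "snd p \<in> set segsB" "crP G (endpas (fst p)) (endpas (snd p))"
      using p by (simp_all add: I_def J_def mem_Times_iff)
    thus "z \<in> {(\<alpha>,\<beta>). \<alpha> \<in> pas G A \<and> \<beta> \<in> pas G B \<and> crP G \<alpha> \<beta>}"
      using p(2) DA(5) DB(5) by (simp add: F_def)
  qed
  have "crossings G A B = card {(\<alpha>,\<beta>). \<alpha> \<in> pas G A \<and> \<beta> \<in> pas G B \<and> crP G \<alpha> \<beta>}"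
    by (rule crossings_pas[OF DA(2) DB(2)])
  also have "\<dots> = card (F ` I)" by (simp only: Seq)
  also have "\<dots> = 1" using card_image[OF injF] Ieq by simp
  finally show ?thesis using cycA cycB edG by (auto simp: has_vassiliev_obstruct_def)
qed

end

theorem lemma3p2:
  fixes G :: "('v, 'h) sgraph"
    and G' :: "('v \<times> nat, 'h + 'v \<times> nat \<times> nat) sgraph"
  assumes "star_graph G"
    and "\<forall>a \<in> verts G. valency G a = 4 \<or> valency G a = 6"
    and "is_expansion G G'"
    and "has_vassiliev_obstruct G'"
  shows "has_vassiliev_obstruct G"
proof -
  obtain lab where lab: "lab_ok G lab" "G' = expand G lab" using assms(3) by (auto simp: is_expansion_def)
  interpret ctx G lab using assms(1,2) lab(1) by unfold_locales
  obtain A' B' where "is_cycle G' A'" "is_cycle G' B'" "edge_disjoint G' A' B'" "crossings G' A' B' = 1"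
    using assms(4) by (auto simp: has_vassiliev_obstruct_def)
  thus ?thesis using main lab(2) by simp
qed


end
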